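(* Let $M=M(S^2;\frac{q_1}{p_1},\frac{q_2}{p_2},\frac{q_3}{p_3})$ with $e(M)\neq0$. Suppose that for some $\{i,j,k\}=\{1,2,3\}$ we have $d:=\gcd(p_i,p_j)>2$ and $s:=\gcd(p_ip_j/d,\,p_k)>2$. If $d\neq4$ or $s\neq4$, then $x_M>0$ (for all $q_1,q_2,q_3$ with $q_i$ coprime to $p_i$).
   Context: $M(S^2;\frac{q_1}{p_1},\frac{q_2}{p_2},\frac{q_3}{p_3})$ ($(p_i,q_i)$ coprime, $p_i\ge1$) is the closed Seifert manifold obtained from $S_{0,3}\times S^1$ by gluing solid tori whose meridians are $p_ic_i+q_ih_i$; $e(M)=\sum_iq_i/p_i$; $\pi_1(M)=\langle c_1,c_2,c_3,h\mid [c_i,h]=1=c_i^{p_i}h^{q_i},\ c_1c_2c_3=1\rangle$. An abelian character is the trace of a diagonal representation $\pi_1(M)\to\mathrm{SL}_2(\mathbb{C})$; it is exceptional if it is the trace of a representation $\rho$ with $\rho(h)=\pm I$ and $\rho(c_i)\neq\pm I$ for $i=1,2,3$; $x_M$ is the number of exceptional abelian characters. *)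

theory Defs
  imports "HOL-Analysis.Analysis"
begin

type_synonym mat2 = "complex^2^2"

datatype gen = Gc1 | Gc2 | Gc3 | Gh

fun cg :: "nat \<Rightarrow> gen" where
  "cg (Suc 0) = Gc1"
| "cg (Suc (Suc 0)) = Gc2"
| "cg _ = Gc3"

definition mpow :: "mat2 \<Rightarrow> nat \<Rightarrow> mat2" where
  "mpow A n = (((**) A) ^^ n) (mat 1)"

definition zpow :: "mat2 \<Rightarrow> int \<Rightarrow> mat2" where
  "zpow A k = (if 0 \<le> k then mpow A (nat k) else mpow (matrix_inv A) (nat (- k)))"

text \<open>A representation pi_1(M) -> SL(2,C), given by the images of the generators,
  for M = M(S^2; q1/p1, q2/p2, q3/p3):
  pi_1(M) = < c1,c2,c3,h | [ci,h]=1 = ci^pi h^qi, c1 c2 c3 = 1 >.\<close>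
definition is_rep :: "(nat \<Rightarrow> int) \<Rightarrow> (nat \<Rightarrow> int) \<Rightarrow> (gen \<Rightarrow> mat2) \<Rightarrow> bool" where
  "is_rep p q \<rho> \<longleftrightarrow>
     (\<forall>g. det (\<rho> g) = 1) \<and>
     (\<forall>i\<in>{1,2,3}. \<rho> (cg i) ** \<rho> Gh = \<rho> Gh ** \<rho> (cg i)
                  \<and> zpow (\<rho> (cg i)) (p i) ** zpow (\<rho> Gh) (q i) = mat 1) \<and>
     \<rho> Gc1 ** \<rho> Gc2 ** \<rho> Gc3 = mat 1"

text \<open>Elements of pi_1(M) are represented by words in the generators and their
  inverses (True = generator, False = its inverse).\<close>
type_synonym word = "(gen \<times> bool) list"

definition eval_word :: "(gen \<Rightarrow> mat2) \<Rightarrow> word \<Rightarrow> mat2" where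
  "eval_word \<rho> w = foldr (\<lambda>(g, b) A. (if b then \<rho> g else matrix_inv (\<rho> g)) ** A) w (mat 1)"

definition character :: "(gen \<Rightarrow> mat2) \<Rightarrow> word \<Rightarrow> complex" where
  "character \<rho> = (\<lambda>w. trace (eval_word \<rho> w))"

definition is_diagonal :: "mat2 \<Rightarrow> bool" where
  "is_diagonal A \<longleftrightarrow> A $ 1 $ 2 = 0 \<and> A $ 2 $ 1 = 0"

definition abelian_characters :: "(nat \<Rightarrow> int) \<Rightarrow> (nat \<Rightarrow> int) \<Rightarrow> (word \<Rightarrow> complex) set" where
  "abelian_characters p q =
     {character \<rho> | \<rho>. is_rep p q \<rho> \<and> (\<forall>g. is_diagonal (\<rho> g))}"

definition exceptional_abelian_characters ::
  "(nat \<Rightarrow> int) \<Rightarrow> (nat \<Rightarrow> int) \<Rightarrow> (word \<Rightarrow> complex) set" where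
  "exceptional_abelian_characters p q =
     {chr \<in> abelian_characters p q.
        \<exists>\<rho>. is_rep p q \<rho> \<and> character \<rho> = chr \<and>
             (\<rho> Gh = mat 1 \<or> \<rho> Gh = - mat 1) \<and>
             (\<forall>i\<in>{1,2,3}. \<rho> (cg i) \<noteq> mat 1 \<and> \<rho> (cg i) \<noteq> - mat 1)}"

text \<open>x_M = number of exceptional abelian characters (as an extended natural,
  so that "x_M > 0" means the set is nonempty).\<close>
definition x_M :: "(nat \<Rightarrow> int) \<Rightarrow> (nat \<Rightarrow> int) \<Rightarrow> enat" where
  "x_M p q = (if finite (exceptional_abelian_characters p q)
              then enat (card (exceptional_abelian_characters p q)) else \<infinity>)"

definition euler_num :: "(nat \<Rightarrow> int) \<Rightarrow> (nat \<Rightarrow> int) \<Rightarrow> rat" where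
  "euler_num p q = (\<Sum>i\<in>{1,2,3::nat}. of_int (q i) / of_int (p i))"

end

theory Submission imports Defs begin

definition Dm :: "complex \<Rightarrow> mat2" where
  "Dm z = (\<chi> a b. if a = b then (if a = 1 then z else inverse z) else 0)"

lemma Dm_nth: "Dm z $ 1 $ 1 = z" "Dm z $ 2 $ 2 = inverse z" "Dm z $ 1 $ 2 = 0" "Dm z $ 2 $ 1 = 0"
  by (simp_all add: Dm_def)

lemma mat2_eq: "(A::mat2) = B \<longleftrightarrow> A$1$1 = B$1$1 \<and> A$1$2 = B$1$2 \<and> A$2$1 = B$2$1 \<and> A$2$2 = B$2$2"
  by (auto simp: vec_eq_iff forall_2)

lemma Dm_mult: "Dm z ** Dm w = Dm (z * w)"
  by (simp add: mat2_eq matrix_matrix_mult_def sum_2 Dm_nth)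

lemma Dm_1: "Dm 1 = mat 1"
  by (simp add: mat2_eq Dm_nth mat_def)

lemma mpow_Dm: "mpow (Dm z) n = Dm (z ^ n)"
  by (induction n) (simp_all add: mpow_def Dm_1 Dm_mult mult.commute)

lemma mpow_1: "mpow (mat 1) n = mat 1"
  by (induction n) (simp_all add: mpow_def)

lemma matrix_inv_1: "matrix_inv (mat 1 :: mat2) = mat 1"
proof -
  have "(mat 1::mat2) ** mat 1 = mat 1 \<and> (mat 1::mat2) ** mat 1 = mat 1" by simp
  then have "(mat 1::mat2) ** matrix_inv (mat 1) = mat 1"
    unfolding matrix_inv_def by (rule someI2) auto
  then show ?thesis by simp
qed

lemma zpow_1: "zpow (mat 1) k = mat 1"
  by (simp add: zpow_def mpow_1 matrix_inv_1)

lemma zpow_Dm: "k \<ge> 0 \<Longrightarrow> zpow (Dm z) k = Dm (z ^ nat k)"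
  by (simp add: zpow_def mpow_Dm)

lemma det_Dm: "z \<noteq> 0 \<Longrightarrow> det (Dm z) = 1"
  by (simp add: det_2 Dm_nth)

lemma Dm_ne: "z^2 \<noteq> 1 \<Longrightarrow> Dm z \<noteq> mat 1 \<and> Dm z \<noteq> - mat 1"
  by (auto simp: mat2_eq Dm_nth mat_def)

lemma diag_Dm: "is_diagonal (Dm z)" "is_diagonal (mat 1)"
  by (simp_all add: is_diagonal_def Dm_nth mat_def)

definition E :: "real \<Rightarrow> complex" where
  "E x = exp (2 * complex_of_real pi * \<i> * complex_of_real x)"

lemma E_add: "E x * E y = E (x + y)"
  by (simp add: E_def exp_add[symmetric] algebra_simps)

lemma E_pow: "E x ^ n = E (real n * x)"
  by (simp add: E_def exp_of_nat_mult[symmetric] algebra_simps)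

lemma E_eq_1: "E x = 1 \<longleftrightarrow> x \<in> \<int>"
proof -
  have "E x = 1 \<longleftrightarrow> (\<exists>n::int. 2 * pi * x = of_int (2 * n) * pi)"
    by (simp add: E_def exp_eq_1)
  also have "\<dots> \<longleftrightarrow> (\<exists>n::int. x = of_int n)"
    by (auto simp: algebra_simps)
  also have "\<dots> \<longleftrightarrow> x \<in> \<int>" by (auto elim: Ints_cases)
  finally show ?thesis .
qed

lemma E_nz: "E x \<noteq> 0" by (simp add: E_def)

lemma combin:
  fixes d :: int and A B :: "int \<Rightarrow> bool"
  assumes d: "d > 2"
    and hA: "\<And>r1 r2. A r1 \<Longrightarrow> A r2 \<Longrightarrow> d dvd 2 * (r1 - r2)"
    and hB: "\<And>r1 r2. B r1 \<Longrightarrow> B r2 \<Longrightarrow> d dvd 2 * (r1 - r2)"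
    and hAB: "\<And>r r'. d = 4 \<Longrightarrow> A r \<Longrightarrow> B r' \<Longrightarrow> False"
  shows "\<exists>r. \<not> A r \<and> \<not> B r"
proof (cases "d = 4")
  case True
  have n2: "\<not> d dvd 2" "\<not> d dvd -2" using True by auto
  show ?thesis
  proof (cases "\<exists>r. A r")
    case True
    then obtain r where "A r" by blast
    then have nB: "\<And>r'. \<not> B r'" using hAB \<open>d = 4\<close> by blast
    have "\<not> A 0 \<or> \<not> A 1" using hA[of 0 1] n2 by auto
    then show ?thesis using nB by blast
  next
    case False
    have "\<not> B 0 \<or> \<not> B 1" using hB[of 0 1] n2 by auto
    then show ?thesis using False by blast
  qed
next
  case False
  have n4: "\<not> d dvd 4"
  proof
    assume h: "d dvd 4"
    hence "d \<le> 4" by (simp add: zdvd_imp_le)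
    hence "d = 3" using d False by auto
    with h show False by simp
  qed
  have n: "\<not> d dvd 2" "\<not> d dvd -2" "\<not> d dvd 4" "\<not> d dvd -4"
    using d n4 by (auto dest: zdvd_imp_le)
  have A: "\<not> (A x \<and> A y)" if "\<bar>x - y\<bar> \<le> 2" "x \<noteq> y" for x y
    using hA[of x y] n that by (auto simp: abs_if dvd_def) (smt (verit))+
  have B: "\<not> (B x \<and> B y)" if "\<bar>x - y\<bar> \<le> 2" "x \<noteq> y" for x y
    using hB[of x y] n that by (auto simp: abs_if dvd_def) (smt (verit))+
  show ?thesis
  proof (rule ccontr)
    assume "\<not> ?thesis"
    then have c: "A r \<or> B r" for r by blast
    show False using c[of 0] c[of 1] c[of 2] c[of 3] c[of 4] A[of 0 1] B[of 0 1] A[of 0 2] B[of 0 2] A[of 1 2] B[of 1 2] A[of 1 3] B[of 1 3] A[of 2 3] B[of 2 3] A[of 2 4] B[of 2 4] A[of 3 4] B[of 3 4] by auto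
  qed
qed


lemma int_frac_Ints: "z \<noteq> 0 \<Longrightarrow> (real_of_int c / real_of_int z \<in> \<int>) \<longleftrightarrow> z dvd c"
proof
  assume z: "z \<noteq> 0" and "real_of_int c / real_of_int z \<in> \<int>"
  then obtain n where "real_of_int c / real_of_int z = of_int n" by (auto elim: Ints_cases)
  then have "real_of_int c = of_int (z * n)" using z by (simp add: field_simps)
  then have "c = z * n" by linarith
  then show "z dvd c" by simp
next
  assume "z \<noteq> 0" "z dvd c"
  then obtain t where "c = z * t" by (auto simp: dvd_def)
  then show "real_of_int c / real_of_int z \<in> \<int>" using \<open>z \<noteq> 0\<close> by simp
qed

theorem proposition5p6:
  fixes p q :: "nat \<Rightarrow> int" and i j k :: nat
  assumes "\<forall>l\<in>{1,2,3}. p l \<ge> 1 \<and> coprime (p l) (q l)"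
    and "euler_num p q \<noteq> 0"
    and "{i, j, k} = {1, 2, 3}"
    and "gcd (p i) (p j) > 2"
    and "gcd (p i * p j div gcd (p i) (p j)) (p k) > 2"
    and "gcd (p i) (p j) \<noteq> 4 \<or> gcd (p i * p j div gcd (p i) (p j)) (p k) \<noteq> 4"
  shows "x_M p q > 0"
proof -
  have card3: "card {i,j,k} = 3" using assms(3) by simp
  have dist: "i \<noteq> j" "j \<noteq> k" "i \<noteq> k"
    using card3 by (auto simp: card_insert_if split: if_splits)
  have ijk: "i \<in> {1,2,3}" "j \<in> {1,2,3}" "k \<in> {1,2,3}" using assms(3) by blast+
  have pos: "p i \<ge> 1" "p j \<ge> 1" "p k \<ge> 1" using assms(1) ijk by blast+
  define d where "d = gcd (p i) (p j)"
  define P where "P = p i div d"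
  define Q where "Q = p j div d"
  have d2: "d > 2" using assms(4) d_def by simp
  have piP: "p i = d * P" unfolding P_def d_def by simp
  have pjQ: "p j = d * Q" unfolding Q_def d_def by simp
  have Ppos: "P > 0" using piP pos d2 zero_less_mult_pos[of d P] by simp
  have Qpos: "Q > 0" using pjQ pos d2 zero_less_mult_pos[of d Q] by simp
  have cop: "coprime P Q" unfolding P_def Q_def d_def
    using pos by (intro div_gcd_coprime) auto
  define L where "L = d * P * Q"
  have "(d * P) * (d * Q) = d * L" unfolding L_def by (simp add: algebra_simps)
  then have "p i * p j div d = L" unfolding piP pjQ using d2 by simp
  then have L_eq: "p i * p j div gcd (p i) (p j) = L" unfolding d_def .
  define s where "s = gcd L (p k)"
  have s2: "s > 2" using assms(5) L_eq s_def by simp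
  have ds4: "d \<noteq> 4 \<or> s \<noteq> 4" using assms(6) L_eq s_def d_def by simp
  have sL: "s dvd L" and spk: "s dvd p k" unfolding s_def by simp_all
  define m where "m = L div s"
  have Lsm: "L = s * m" using sL m_def by simp
  have Lpos: "L > 0" unfolding L_def using d2 Ppos Qpos by simp
  have mpos: "m > 0" using Lsm Lpos s2 zero_less_mult_pos[of s m] by simp
  obtain u v where uv: "u * P + v * Q = 1" using bezout_int[of P Q] cop by auto
  define a0 where "a0 = - m * v"
  define b0 where "b0 = - m * u"
  have ab0: "a0 * Q + b0 * P = - m" unfolding a0_def b0_def
    using uv by (metis (no_types, lifting) add.commute distrib_left mult.assoc mult.commute mult.right_neutral mult_minus_left)
  define A where "A r = (p i dvd 2 * (a0 + P * r))" for r
  define B where "B r = (p j dvd 2 * (b0 - Q * r))" for r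
  have hA: "d dvd 2 * (r1 - r2)" if "A r1" "A r2" for r1 r2
  proof -
    have "p i dvd 2 * (a0 + P * r1) - 2 * (a0 + P * r2)"
      using that unfolding A_def by (rule dvd_diff)
    then have "P * d dvd 2 * (a0 + P * r1) - 2 * (a0 + P * r2)" by (simp add: piP mult.commute)
    also have "2 * (a0 + P * r1) - 2 * (a0 + P * r2) = P * (2 * (r1 - r2))" by (simp add: algebra_simps)
    finally show ?thesis using Ppos by simp
  qed
  have hB: "d dvd 2 * (r1 - r2)" if "B r1" "B r2" for r1 r2
  proof -
    have "p j dvd 2 * (b0 - Q * r2) - 2 * (b0 - Q * r1)"
      using that(2,1) unfolding B_def by (rule dvd_diff)
    then have "Q * d dvd 2 * (b0 - Q * r2) - 2 * (b0 - Q * r1)" by (simp add: pjQ mult.commute)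
    also have "2 * (b0 - Q * r2) - 2 * (b0 - Q * r1) = Q * (2 * (r1 - r2))" by (simp add: algebra_simps)
    finally show ?thesis using Qpos by simp
  qed
  have hAB: False if "d = 4" "A r" "B r'" for r r'
  proof -
    have s4: "s \<noteq> 4" using ds4 that by simp
    have 1: "L dvd Q * (2 * (a0 + P * r))" using that(2) unfolding A_def piP L_def
      by (metis mult.commute mult_dvd_mono dvd_refl)
    have 2: "L dvd P * (2 * (b0 - Q * r'))" using that(3) unfolding B_def pjQ L_def
      by (metis mult.commute mult.left_commute mult_dvd_mono dvd_refl)
    have "L dvd Q * (2 * (a0 + P * r)) + P * (2 * (b0 - Q * r'))" using 1 2 by simp
    also have "Q * (2 * (a0 + P * r)) + P * (2 * (b0 - Q * r')) = 2 * (a0 * Q + b0 * P) + 2 * P * Q * (r - r')"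
      by (simp add: algebra_simps)
    also have "\<dots> = -2 * m + 2 * P * Q * (r - r')" using ab0 by simp
    finally have h: "L dvd -2 * m + 2 * P * Q * (r - r')" .
    have "L dvd 2 * (-2 * m + 2 * P * Q * (r - r'))" using h by (rule dvd_mult)
    also have "2 * (-2 * m + 2 * P * Q * (r - r')) = L * (r - r') - 4 * m"
      using that(1) unfolding L_def by (simp add: algebra_simps)
    finally have h2: "L dvd L * (r - r') - 4 * m" .
    have "L dvd L * (r - r') - (L * (r - r') - 4 * m)" using dvd_diff[OF dvd_triv_left h2] .
    then have "L dvd 4 * m" by simp
    then have "m * s dvd m * 4" using Lsm by (simp add: mult.commute)
    then have "s dvd 4" using mpos by simp
    then have "s \<le> 4" by (simp add: zdvd_imp_le)
    then have "s = 3" using s2 s4 by simp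
    with \<open>s dvd 4\<close> show False by simp
  qed
  obtain r where r: "\<not> A r" "\<not> B r"
  proof -
    have "\<exists>r. \<not> A r \<and> \<not> B r"
      by (rule combin[of d A B]) (use d2 hA hB hAB in blast)+
    then show ?thesis using that by blast
  qed
  define a where "a = a0 + P * r"
  define b where "b = b0 - Q * r"
  have abm: "a * Q + b * P = - m" unfolding a_def b_def using ab0 by (simp add: algebra_simps)
  define x where "x l = (if l = i then real_of_int a / real_of_int (p i)
     else if l = j then real_of_int b / real_of_int (p j) else 1 / real_of_int s)" for l
  have xi: "x i = real_of_int a / real_of_int (p i)" and xj: "x j = real_of_int b / real_of_int (p j)"
    and xk: "x k = 1 / real_of_int s" using dist unfolding x_def by auto
  have sum0: "x 1 + x 2 + x 3 = 0"
  proof -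
    have "x 1 + x 2 + x 3 = sum x {1,2,3}" by simp
    also have "\<dots> = sum x {i,j,k}" using assms(3) by simp
    also have "\<dots> = x i + x j + x k" using dist by simp
    also have "\<dots> = 0"
    proof -
      have "real_of_int (a * Q + b * P) = - real_of_int m" using abm by simp
      moreover have "real_of_int L = real_of_int s * real_of_int m" using Lsm by simp
      ultimately show ?thesis unfolding xi xj xk piP pjQ using d2 Ppos Qpos s2 mpos
        unfolding L_def by (simp add: field_simps)
    qed
    finally show ?thesis .
  qed
  have xint: "real_of_int (p l) * x l \<in> \<int>" if "l \<in> {1,2,3}" for l
  proof -
    have "l \<in> {i,j,k}" using that assms(3) by simp
    moreover have "real_of_int (p k) * (1 / real_of_int s) \<in> \<int>"
      using spk s2 int_frac_Ints[of s "p k"] by simp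
    ultimately show ?thesis using xi xj xk pos by auto
  qed
  have x2: "2 * x l \<notin> \<int>" if "l \<in> {1,2,3}" for l
  proof -
    have "l \<in> {i,j,k}" using that assms(3) by simp
    moreover have "2 * x i \<notin> \<int>" using r(1) int_frac_Ints[of "p i" "2 * a"] pos
      unfolding xi A_def a_def by simp
    moreover have "2 * x j \<notin> \<int>" using r(2) int_frac_Ints[of "p j" "2 * b"] pos
      unfolding xj B_def b_def by simp
    moreover have "2 * x k \<notin> \<int>"
    proof -
      have "\<not> s dvd 2" using s2 by (auto dest: zdvd_imp_le)
      then show ?thesis using int_frac_Ints[of s 2] s2 unfolding xk by simp
    qed
    ultimately show ?thesis by auto
  qed
  define \<rho> where "\<rho> g = (case g of Gc1 \<Rightarrow> Dm (E (x 1)) | Gc2 \<Rightarrow> Dm (E (x 2))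
     | Gc3 \<Rightarrow> Dm (E (x 3)) | Gh \<Rightarrow> mat 1)" for g
  have rho_cg: "\<rho> (cg l) = Dm (E (x l))" if "l \<in> {1,2,3}" for l
    using that unfolding \<rho>_def by (auto simp: numeral_2_eq_2 numeral_3_eq_3)
  have rho_h: "\<rho> Gh = mat 1" unfolding \<rho>_def by simp
  have rep: "is_rep p q \<rho>"
    unfolding is_rep_def
  proof (intro conjI ballI allI)
    fix g show "det (\<rho> g) = 1" by (cases g) (simp_all add: \<rho>_def det_Dm E_nz det_I)
  next
    fix l :: nat assume l: "l \<in> {1,2,3}"
    show "\<rho> (cg l) ** \<rho> Gh = \<rho> Gh ** \<rho> (cg l)" by (simp add: rho_h)
    have pl: "p l \<ge> 1" using assms(1) l by blast
    obtain n where n: "real_of_int (p l) * x l = of_int n" using xint[OF l] by (auto elim: Ints_cases)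
    have "E (x l) ^ nat (p l) = E (real (nat (p l)) * x l)" by (rule E_pow)
    also have "real (nat (p l)) = real_of_int (p l)" using pl by simp
    also have "E (real_of_int (p l) * x l) = 1" using n E_eq_1 by simp
    finally show "zpow (\<rho> (cg l)) (p l) ** zpow (\<rho> Gh) (q l) = mat 1"
      using pl by (simp add: rho_cg[OF l] rho_h zpow_1 zpow_Dm Dm_1)
  next
    have "\<rho> Gc1 ** \<rho> Gc2 ** \<rho> Gc3 = Dm (E (x 1 + x 2 + x 3))"
      by (simp add: \<rho>_def Dm_mult E_add)
    also have "\<dots> = mat 1" using sum0 E_eq_1[of 0] by (simp add: Dm_1)
    finally show "\<rho> Gc1 ** \<rho> Gc2 ** \<rho> Gc3 = mat 1" .
  qed
  have diag: "is_diagonal (\<rho> g)" for g by (cases g) (simp_all add: \<rho>_def diag_Dm)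
  have exc: "\<rho> (cg l) \<noteq> mat 1 \<and> \<rho> (cg l) \<noteq> - mat 1" if "l \<in> {1,2,3}" for l
  proof -
    have "E (x l) ^ 2 = E (real 2 * x l)" by (rule E_pow)
    also have "\<dots> \<noteq> 1" using x2[OF that] E_eq_1 by simp
    finally show ?thesis using rho_cg[OF that] Dm_ne by simp
  qed
  have mem: "character \<rho> \<in> exceptional_abelian_characters p q"
    unfolding exceptional_abelian_characters_def abelian_characters_def
    using rep diag exc rho_h by blast
  show ?thesis
  proof (cases "finite (exceptional_abelian_characters p q)")
    case True
    then have "card (exceptional_abelian_characters p q) > 0" using mem card_gt_0_iff by blast
    then show ?thesis using True unfolding x_M_def by (simp add: zero_enat_def)
  next
    case False
    then show ?thesis unfolding x_M_def by simp
  qed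
qed

end
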